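(* Let $(a_k)_{k\in\mathbb{Z}}$ be real numbers, all but finitely many zero, $N\ge1$, and let $c:\mathbb{Z}^N\to\mathbb{R}$ be square-summable and $\widetilde S_N$-invariant. Then there exists a sequence $(c_n)_{n\ge1}$ of real-valued, finitely supported, $\widetilde S_N$-invariant functions on $\mathbb{Z}^N$ such that $T_{D_0}c_n\to T_{D_0}c$ in $L^2(\mathbb{Z}^N)$ as $n\to\infty$.
   Context: $\widetilde S_N$ is the group of transformations of $\mathbb{Z}^N$ generated by the coordinate transpositions $\sigma_{i,j}$ ($1\le i,j\le N$) and $\gamma_1(z_1,\dots,z_N)=(-z_1,z_2-z_1,\dots,z_N-z_1)$. For $c:\mathbb{Z}^N\to\mathbb{R}$, the operator $T_{D_0}$ associated with $D_0=\sum_ka_k\partial_k$ is $(T_{D_0}c)(z)=\sum_{k\in\mathbb{Z}}a_k\,c(z-ke)$, where $e=(1,\dots,1)\in\mathbb{Z}^N$. *)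

theory Defs
  imports "HOL-Analysis.Analysis"
begin

text \<open>Points of Z^N are integer lists of length N; coordinate i (1-based in the paper)
  is list index i-1.\<close>

definition lattice :: "nat \<Rightarrow> int list set" where
  "lattice N = {z. length z = N}"

definition coord_swap :: "nat \<Rightarrow> nat \<Rightarrow> int list \<Rightarrow> int list" where
  "coord_swap i j z = z[i := z ! j, j := z ! i]"

definition gamma1 :: "int list \<Rightarrow> int list" where
  "gamma1 z = (case z of [] \<Rightarrow> [] | z1 # zs \<Rightarrow> (- z1) # map (\<lambda>x. x - z1) zs)"

text \<open>The group tilde S_N: generated by the transpositions and gamma1 (all are involutions,
  so the closure of the identity under left composition with generators is the group).\<close>
inductive_set tSN :: "nat \<Rightarrow> (int list \<Rightarrow> int list) set" for N where
  tSN_id: "id \<in> tSN N"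
| tSN_swap: "g \<in> tSN N \<Longrightarrow> i < N \<Longrightarrow> j < N \<Longrightarrow> coord_swap i j \<circ> g \<in> tSN N"
| tSN_gamma: "g \<in> tSN N \<Longrightarrow> gamma1 \<circ> g \<in> tSN N"

definition tSN_invariant :: "nat \<Rightarrow> (int list \<Rightarrow> real) \<Rightarrow> bool" where
  "tSN_invariant N c \<longleftrightarrow> (\<forall>g\<in>tSN N. \<forall>z\<in>lattice N. c (g z) = c z)"

definition TD0 :: "(int \<Rightarrow> real) \<Rightarrow> (int list \<Rightarrow> real) \<Rightarrow> int list \<Rightarrow> real" where
  "TD0 a c z = (\<Sum>k\<in>{k. a k \<noteq> 0}. a k * c (map (\<lambda>x. x - k) z))"

end

theory Submission
  imports Defs
begin

definition diffs :: "int list \<Rightarrow> int set" where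
  "diffs z = {x - y | x y. x \<in> set (0#z) \<and> y \<in> set (0#z)}"

definition sz :: "int list \<Rightarrow> nat" where
  "sz z = nat (Max (abs ` diffs z))"

lemma finite_diffs: "finite (diffs z)"
proof -
  have "diffs z = (\<lambda>(x,y). x - y) ` (set (0#z) \<times> set (0#z))" unfolding diffs_def by auto
  thus ?thesis by simp
qed

lemma diffs_gamma1: "diffs (gamma1 z) = diffs z"
proof (cases z)
  case Nil thus ?thesis by (simp add: gamma1_def)
next
  case (Cons z1 zs)
  have s: "set (0 # gamma1 z) = (\<lambda>x. x - z1) ` set (0 # z)"
    using Cons by (auto simp: gamma1_def)
  show ?thesis unfolding diffs_def s
  proof (intro set_eqI iffI)
    fix d assume "d \<in> {x - y |x y. x \<in> (\<lambda>x. x - z1) ` set (0 # z) \<and> y \<in> (\<lambda>x. x - z1) ` set (0 # z)}"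
    then obtain x y where "d = (x - z1) - (y - z1)" "x \<in> set (0#z)" "y \<in> set (0#z)" by blast
    thus "d \<in> {x - y |x y. x \<in> set (0 # z) \<and> y \<in> set (0 # z)}" by auto
  next
    fix d assume "d \<in> {x - y |x y. x \<in> set (0 # z) \<and> y \<in> set (0 # z)}"
    then obtain x y where "d = (x - z1) - (y - z1)" "x \<in> set (0#z)" "y \<in> set (0#z)" by auto
    thus "d \<in> {x - y |x y. x \<in> (\<lambda>x. x - z1) ` set (0 # z) \<and> y \<in> (\<lambda>x. x - z1) ` set (0 # z)}" by blast
  qed
qed

lemma diffs_swap: "i < length z \<Longrightarrow> j < length z \<Longrightarrow> diffs (coord_swap i j z) = diffs z"
  by (simp add: diffs_def coord_swap_def)

lemma tSN_pres: "g \<in> tSN N \<Longrightarrow> length z = N \<Longrightarrow> length (g z) = N \<and> diffs (g z) = diffs z"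
proof (induction g arbitrary: z rule: tSN.induct)
  case tSN_id thus ?case by simp
next
  case (tSN_swap g i j) thus ?case using diffs_swap[of i "g z" j] by (simp add: coord_swap_def)
next
  case (tSN_gamma g)
  have "length (gamma1 (g z)) = length (g z)" by (cases "g z") (simp_all add: gamma1_def)
  thus ?case using tSN_gamma diffs_gamma1[of "g z"] by simp
qed

lemma sz_bound: "x \<in> set z \<Longrightarrow> \<bar>x\<bar> \<le> int (sz z)"
proof -
  assume "x \<in> set z"
  hence "x - 0 \<in> diffs z" unfolding diffs_def by fastforce
  hence "\<bar>x\<bar> \<le> Max (abs ` diffs z)" using finite_diffs by (simp add: Max_ge)
  thus ?thesis unfolding sz_def by simp linarith
qed

lemma finite_sz: "finite {z \<in> lattice N. sz z \<le> n}"
proof -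
  have "{z \<in> lattice N. sz z \<le> n} \<subseteq> {xs. set xs \<subseteq> {-int n..int n} \<and> length xs = N}"
    using sz_bound unfolding lattice_def by fastforce
  thus ?thesis using finite_lists_length_eq[of "{-int n..int n}" N] finite_subset by blast
qed

lemma bij_tr: "bij_betw (map (\<lambda>x. x - k)) (lattice N) (lattice N)"
proof (rule bij_betw_byWitness[where f'="map (\<lambda>x. x + k)"])
  show "map (\<lambda>x. x - k) ` lattice N \<subseteq> lattice N" "map (\<lambda>x. x + k) ` lattice N \<subseteq> lattice N"
    by (auto simp: lattice_def)
qed (auto simp: map_idI)

lemma summable_sum_fin:
  fixes f :: "'k \<Rightarrow> 'a \<Rightarrow> real"
  assumes "finite K" "\<And>k. k \<in> K \<Longrightarrow> f k summable_on A"
  shows "(\<lambda>z. \<Sum>k\<in>K. f k z) summable_on A \<and> infsum (\<lambda>z. \<Sum>k\<in>K. f k z) A = (\<Sum>k\<in>K. infsum (f k) A)"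
  using assms
proof (induction K rule: finite_induct)
  case empty thus ?case by simp
next
  case (insert x F)
  hence h: "f x summable_on A" "(\<lambda>z. \<Sum>k\<in>F. f k z) summable_on A"
     "infsum (\<lambda>z. \<Sum>k\<in>F. f k z) A = (\<Sum>k\<in>F. infsum (f k) A)" by auto
  show ?case using insert.hyps summable_on_add[OF h(1,2)] infsum_add[OF h(1,2)] h(3) by simp
qed


lemma tail_tendsto:
  fixes f :: "int list \<Rightarrow> real"
  assumes sf: "f summable_on lattice N" and nn: "\<And>z. f z \<ge> 0"
  shows "(\<lambda>n. infsum (\<lambda>z. if sz z \<le> n then 0 else f z) (lattice N)) \<longlonglongrightarrow> 0"
proof (rule LIMSEQ_I)
  fix r :: real assume r: "r > 0"
  define L where "L = lattice N"
  define g where "g n z = (if sz z \<le> n then 0 else f z)" for n z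
  define h where "h n z = (if sz z \<le> n then f z else 0)" for n z
  have sg: "g n summable_on L" for n
    by (rule summable_on_comparison_test[OF sf[folded L_def]]) (auto simp: g_def nn)
  have sh: "h n summable_on L" for n
    by (rule summable_on_comparison_test[OF sf[folded L_def]]) (auto simp: h_def nn)
  have add: "infsum f L = infsum (g n) L + infsum (h n) L" for n
  proof -
    have "infsum f L = infsum (\<lambda>z. g n z + h n z) L" by (rule infsum_cong) (simp add: g_def h_def)
    also have "\<dots> = infsum (g n) L + infsum (h n) L" by (rule infsum_add[OF sg sh])
    finally show ?thesis .
  qed
  obtain F where F: "finite F" "F \<subseteq> L" "dist (sum f F) (infsum f L) \<le> r/2"
    using infsum_finite_approximation[OF sf[folded L_def], of "r/2"] r by auto
  define n0 where "n0 = Max (insert 0 (sz ` F))"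
  show "\<exists>no. \<forall>n\<ge>no. norm (infsum (\<lambda>z. if sz z \<le> n then 0 else f z) (lattice N) - 0) < r"
  proof (intro exI allI impI)
    fix n assume n: "n \<ge> n0"
    have szF: "z \<in> F \<Longrightarrow> sz z \<le> n" for z
      using n F(1) unfolding n0_def by (meson Max_ge finite_imageI finite_insert image_eqI insertI2 le_trans)
    have "sum f F = sum (h n) F" by (rule sum.cong) (auto simp: h_def szF)
    also have "\<dots> \<le> infsum (h n) L"
      by (rule finite_sum_le_infsum[OF sh F(1,2)]) (simp add: h_def nn)
    finally have "sum f F \<le> infsum (h n) L" .
    moreover have "infsum (g n) L \<ge> 0" by (rule infsum_nonneg) (simp add: g_def nn)
    ultimately have "0 \<le> infsum (g n) L" "infsum (g n) L \<le> r/2"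
      using add[of n] F(3) by (auto simp: dist_real_def)
    thus "norm (infsum (\<lambda>z. if sz z \<le> n then 0 else f z) (lattice N) - 0) < r"
      using r unfolding g_def L_def by simp
  qed
qed


theorem lemma5p1:
  fixes a :: "int \<Rightarrow> real" and N :: nat and c :: "int list \<Rightarrow> real"
  assumes "finite {k. a k \<noteq> 0}"
    and "N \<ge> 1"
    and "(\<lambda>z. (c z)\<^sup>2) summable_on lattice N"
    and "tSN_invariant N c"
  shows "\<exists>cs :: nat \<Rightarrow> int list \<Rightarrow> real.
           (\<forall>n. finite {z \<in> lattice N. cs n z \<noteq> 0} \<and> tSN_invariant N (cs n)
                \<and> (\<lambda>z. (TD0 a (cs n) z - TD0 a c z)\<^sup>2) summable_on lattice N)
         \<and> (\<lambda>n. sqrt (\<Sum>\<^sub>\<infinity>z\<in>lattice N. (TD0 a (cs n) z - TD0 a c z)\<^sup>2)) \<longlonglongrightarrow> 0"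
proof -
  define L where "L = lattice N"
  define K where "K = {k. a k \<noteq> 0}"
  define A where "A = (\<Sum>k\<in>K. (a k)\<^sup>2)"
  define tr where "tr k = map (\<lambda>x::int. x - k)" for k
  define cs where "cs n z = (if sz z \<le> n then c z else 0)" for n z
  define d where "d n z = (if sz z \<le> n then 0 else c z)" for n z
  define t where "t n = infsum (\<lambda>z. (d n z)\<^sup>2) L" for n
  define E where "E n z = (TD0 a (cs n) z - TD0 a c z)\<^sup>2" for n z
  define G where "G n z = A * (\<Sum>k\<in>K. (d n (tr k z))\<^sup>2)" for n z
  have finK: "finite K" using assms(1) K_def by simp
  have A0: "A \<ge> 0" unfolding A_def by (simp add: sum_nonneg)
  have sc: "(\<lambda>z. (c z)\<^sup>2) summable_on L" using assms(3) L_def by simp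
  have sd: "(\<lambda>z. (d n z)\<^sup>2) summable_on L" for n
    by (rule summable_on_comparison_test[OF sc]) (auto simp: d_def)
  have t0: "t \<longlonglongrightarrow> 0"
  proof -
    have "(\<lambda>z. (d n z)\<^sup>2) = (\<lambda>z. if sz z \<le> n then 0 else (c z)\<^sup>2)" for n
      by (auto simp: d_def)
    thus ?thesis using tail_tendsto[OF sc[unfolded L_def]] unfolding t_def L_def by simp
  qed
  have t_nn: "t n \<ge> 0" for n unfolding t_def by (rule infsum_nonneg) simp
  have sdk: "(\<lambda>z. (d n (tr k z))\<^sup>2) summable_on L \<and> infsum (\<lambda>z. (d n (tr k z))\<^sup>2) L = t n" for n k
    using summable_on_reindex_bij_betw[OF bij_tr[of k N], of "\<lambda>z. (d n z)\<^sup>2"]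
      infsum_reindex_bij_betw[OF bij_tr[of k N], of "\<lambda>z. (d n z)\<^sup>2"] sd[of n]
    unfolding tr_def t_def L_def by simp
  have sG: "G n summable_on L \<and> infsum (G n) L = A * (real (card K) * t n)" for n
  proof -
    have h: "(\<lambda>z. \<Sum>k\<in>K. (d n (tr k z))\<^sup>2) summable_on L \<and>
      infsum (\<lambda>z. \<Sum>k\<in>K. (d n (tr k z))\<^sup>2) L = (\<Sum>k\<in>K. t n)"
      using summable_sum_fin[OF finK, of "\<lambda>k z. (d n (tr k z))\<^sup>2" L] sdk by simp
    show ?thesis unfolding G_def
      using summable_on_cmult_right[OF h[THEN conjunct1], of A]
        infsum_cmult_right[OF h[THEN conjunct1], of A] h by simp
  qed
  have EG: "E n z \<le> G n z" "E n z \<ge> 0" for n z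
  proof -
    have "TD0 a (cs n) z - TD0 a c z = - (\<Sum>k\<in>K. a k * d n (tr k z))"
      unfolding TD0_def K_def[symmetric]
      by (simp add: sum_subtractf[symmetric] sum_negf[symmetric] cs_def d_def tr_def) (rule sum.cong, auto)
    hence "E n z = (\<Sum>k\<in>K. a k * d n (tr k z))\<^sup>2" unfolding E_def by simp
    also have "\<dots> \<le> A * (\<Sum>k\<in>K. (d n (tr k z))\<^sup>2)"
      unfolding A_def by (rule Cauchy_Schwarz_ineq_sum)
    finally show "E n z \<le> G n z" unfolding G_def .
    show "E n z \<ge> 0" unfolding E_def by simp
  qed
  have sE: "E n summable_on L" for n
    by (rule summable_on_comparison_test[OF sG[THEN conjunct1]]) (use EG in auto)
  have iE: "infsum (E n) L \<le> A * (real (card K) * t n)" for n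
    using infsum_mono[OF sE sG[THEN conjunct1]] EG sG by metis
  have iE0: "infsum (E n) L \<ge> 0" for n by (rule infsum_nonneg) (use EG in auto)
  have lim: "(\<lambda>n. sqrt (infsum (E n) L)) \<longlonglongrightarrow> 0"
  proof (rule tendsto_sandwich[of "\<lambda>_. 0" _ _ "\<lambda>n. sqrt (A * (real (card K) * t n))"])
    show "\<forall>\<^sub>F n in sequentially. 0 \<le> sqrt (infsum (E n) L)" using iE0 by simp
    show "\<forall>\<^sub>F n in sequentially. sqrt (infsum (E n) L) \<le> sqrt (A * (real (card K) * t n))"
      using iE by simp
    show "(\<lambda>_. 0::real) \<longlonglongrightarrow> 0" by simp
    have "(\<lambda>n. sqrt (A * (real (card K) * t n))) \<longlonglongrightarrow> sqrt (A * (real (card K) * 0))"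
      by (intro tendsto_intros t0)
    thus "(\<lambda>n. sqrt (A * (real (card K) * t n))) \<longlonglongrightarrow> 0" by simp
  qed
  have fin: "finite {z \<in> lattice N. cs n z \<noteq> 0}" for n
    by (rule finite_subset[OF _ finite_sz[of N n]]) (auto simp: cs_def split: if_splits)
  have inv: "tSN_invariant N (cs n)" for n
    unfolding tSN_invariant_def
  proof (intro ballI)
    fix g z assume g: "g \<in> tSN N" and z: "z \<in> lattice N"
    have "diffs (g z) = diffs z" using tSN_pres[OF g] z by (simp add: lattice_def)
    hence "sz (g z) = sz z" by (simp add: sz_def)
    moreover have "c (g z) = c z" using assms(4) g z by (simp add: tSN_invariant_def)
    ultimately show "cs n (g z) = cs n z" by (simp add: cs_def)
  qed
  show ?thesis
    using fin inv sE[unfolded E_def L_def] lim[unfolded E_def L_def] by blast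
qed

end
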